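(* Every closed ball $B(p,r)$ of $(\mathbb H,d_\alpha)$ is a convex subset of $\mathbb R^3$ in the Euclidean sense.
   Context: $\mathbb H=\mathbb R^3$ with group law $(x,y,z)\cdot(x',y',z')=(x+x',y+y',z+z'+\tfrac12(xy'-yx'))$ and dilations $\delta_\lambda(x,y,z)=(\lambda x,\lambda y,\lambda^2z)$. Fix $\alpha>0$ such that $d_\alpha(p,q)=\inf\{r>0:\delta_{1/r}(p^{-1}\cdot q)\in B_\alpha\}$ is a distance on $\mathbb H$, where $B_\alpha$ is the closed Euclidean ball of radius $\alpha$ centered at $0$. $B(p,r)=\{q:d_\alpha(q,p)\le r\}$. *)

theory Defs
  imports "HOL-Analysis.Analysis"
begin

type_synonym heis = "real \<times> real \<times> real"

definition hmult :: "heis \<Rightarrow> heis \<Rightarrow> heis" where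
  "hmult p q = (case p of (x, y, z) \<Rightarrow> case q of (x', y', z') \<Rightarrow>
     (x + x', y + y', z + z' + (1/2) * (x * y' - y * x')))"

definition hinv :: "heis \<Rightarrow> heis" where
  "hinv p = (case p of (x, y, z) \<Rightarrow> (-x, -y, -z))"

definition hdil :: "real \<Rightarrow> heis \<Rightarrow> heis" where
  "hdil l p = (case p of (x, y, z) \<Rightarrow> (l * x, l * y, l^2 * z))"

definition euclid_ball :: "real \<Rightarrow> heis set" where
  "euclid_ball a = {(x, y, z). x^2 + y^2 + z^2 \<le> a^2}"

definition d_alpha :: "real \<Rightarrow> heis \<Rightarrow> heis \<Rightarrow> real" where
  "d_alpha a p q = Inf {r. r > 0 \<and> hdil (1/r) (hmult (hinv p) q) \<in> euclid_ball a}"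

definition is_distance :: "('b \<Rightarrow> 'b \<Rightarrow> real) \<Rightarrow> bool" where
  "is_distance d \<longleftrightarrow>
     (\<forall>p q. d p q \<ge> 0) \<and> (\<forall>p q. d p q = 0 \<longleftrightarrow> p = q) \<and>
     (\<forall>p q. d p q = d q p) \<and> (\<forall>p q w. d p w \<le> d p q + d q w)"

definition hball :: "real \<Rightarrow> heis \<Rightarrow> real \<Rightarrow> heis set" where
  "hball a p r = {q. d_alpha a q p \<le> r}"

end

theory Submission
  imports Defs
begin

lemma mem_iff:
  assumes "s > 0"
  shows "hdil (1/s) (x,y,z) \<in> euclid_ball a \<longleftrightarrow> x^2/s^2 + y^2/s^2 + z^2/s^4 \<le> a^2"
proof -
  have "((1/s)^2*z)^2 = z^2/s^4" by (simp add: power_divide power_mult_distrib flip: power_mult)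
  then show ?thesis by (simp add: hdil_def euclid_ball_def power_divide power_mult_distrib)
qed

lemma phi_mono:
  assumes "0 < (r::real)" "r \<le> s"
  shows "x^2/s^2 + y^2/s^2 + z^2/s^4 \<le> x^2/r^2 + y^2/r^2 + z^2/r^(4::nat)"
proof -
  have a: "r^2 \<le> s^2" using assms by (simp add: power_mono)
  have b: "r^4 \<le> s^(4::nat)" using assms by (simp add: power_mono)
  have "x^2/s^2 \<le> x^2/r^2" using a assms by (intro divide_left_mono) auto
  moreover have "y^2/s^2 \<le> y^2/r^2" using a assms by (intro divide_left_mono) auto
  moreover have "z^2/s^4 \<le> z^2/r^4" using b assms by (intro divide_left_mono) auto
  ultimately show ?thesis by linarith
qed

lemma key:
  assumes a: "a > 0" and r: "r > 0"
  shows "Inf {s. s>0 \<and> hdil (1/s) (x,y,z) \<in> euclid_ball a} \<le> r \<longleftrightarrow> hdil (1/r) (x,y,z) \<in> euclid_ball a"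
proof -
  define S where "S = {s. s>0 \<and> hdil (1/s) (x,y,z) \<in> euclid_ball a}"
  define \<phi> where "\<phi> = (\<lambda>s::real. x^2/s^2 + y^2/s^2 + z^2/s^4)"
  have S: "S = {s. s > 0 \<and> \<phi> s \<le> a^2}" unfolding S_def \<phi>_def using mem_iff by auto
  have bdd: "bdd_below S" unfolding S by (rule bdd_belowI[of _ 0]) auto
  define N where "N = x^2+y^2+z^2"
  define s0 where "s0 = max 1 (sqrt N / a)"
  have s0: "s0 \<ge> 1" unfolding s0_def by simp
  have N0: "N \<ge> 0" unfolding N_def by simp
  have "s0^2 \<ge> (sqrt N / a)^2" unfolding s0_def using a N0
    by (intro power_mono) auto
  hence "s0^2 \<ge> N / a^2" using a by (simp add: N_def power_divide)
  hence Ns: "N \<le> a^2 * s0^2" using a by (simp add: field_simps)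
  have "\<phi> s0 \<le> N / s0^2"
  proof -
    have "s0^2 \<le> s0^4" using s0 by (simp add: power_increasing)
    hence "z^2/s0^4 \<le> z^2/s0^2" using s0 by (auto intro!: divide_left_mono)
    thus ?thesis unfolding \<phi>_def N_def by (simp add: add_divide_distrib)
  qed
  also have "\<dots> \<le> a^2" using Ns s0 by (simp add: divide_le_eq)
  finally have "s0 \<in> S" unfolding S using s0 by auto
  hence ne: "S \<noteq> {}" by auto
  show ?thesis unfolding S_def[symmetric]
  proof
    assume "hdil (1/r) (x,y,z) \<in> euclid_ball a"
    hence "r \<in> S" unfolding S_def using r by auto
    thus "Inf S \<le> r" using bdd by (simp add: cInf_lower)
  next
    assume inf: "Inf S \<le> r"
    show "hdil (1/r) (x,y,z) \<in> euclid_ball a"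
    proof (rule ccontr)
      assume "hdil (1/r) (x,y,z) \<notin> euclid_ball a"
      hence big: "\<phi> r > a^2" using mem_iff[OF r] unfolding \<phi>_def by auto
      define c where "c = root 4 ((\<phi> r / a^2 + 1)/2)"
      have q: "\<phi> r / a^2 > 1" using big a by (simp add: divide_less_eq)
      have c4: "c^4 = (\<phi> r / a^2 + 1)/2" unfolding c_def using q
        by (simp add: real_root_pow_pos2)
      have c4lt: "c^4 < \<phi> r / a^2" using c4 q by simp
      have c1: "c > 1" unfolding c_def using q by simp
      have lb: "\<phi> (r*c) \<ge> \<phi> r / c^4"
      proof -
        have "c^2 \<le> c^4" using c1 by (simp add: power_increasing)
        hence "x^2/(r^2*c^4) \<le> x^2/(r^2*c^2)" "y^2/(r^2*c^4) \<le> y^2/(r^2*c^2)"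
          using c1 r by (auto intro!: divide_left_mono)
        moreover have "\<phi> r / c^4 = x^2/(r^2*c^4) + y^2/(r^2*c^4) + z^2/(r^4*c^4)"
          unfolding \<phi>_def by (simp add: add_divide_distrib)
        moreover have "\<phi> (r*c) = x^2/(r^2*c^2) + y^2/(r^2*c^2) + z^2/(r^4*c^4)"
          unfolding \<phi>_def by (simp add: power_mult_distrib)
        ultimately show ?thesis by linarith
      qed
      have "a^2 < \<phi> r / c^4" using c4lt c1 a by (simp add: field_simps)
      with lb have big2: "\<phi> (r*c) > a^2" by linarith
      have "r*c \<le> Inf S"
      proof (rule cInf_greatest[OF ne])
        fix s assume "s \<in> S"
        hence s: "s > 0" "\<phi> s \<le> a^2" unfolding S by auto
        show "r*c \<le> s"
        proof (rule ccontr)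
          assume "\<not> r*c \<le> s"
          hence "\<phi> (r*c) \<le> \<phi> s" unfolding \<phi>_def using s by (intro phi_mono) auto
          thus False using s big2 by linarith
        qed
      qed
      moreover have "r < r*c" using r c1 by simp
      ultimately show False using inf unfolding S_def by linarith
    qed
  qed
qed

lemma euclid_ball_cball: "euclid_ball a = cball 0 a" if "a \<ge> 0"
proof -
  have "(x,y,z) \<in> euclid_ball a \<longleftrightarrow> (x,y,z) \<in> cball 0 a" for x y z
  proof -
    have "norm (x,y,z) = sqrt (x^2+y^2+z^2)"
      by (simp add: norm_prod_def)
    moreover have "sqrt (x^2+y^2+z^2) \<le> a \<longleftrightarrow> x^2+y^2+z^2 \<le> a^2"
    proof -
      have "sqrt (x^2+y^2+z^2) \<le> a \<longleftrightarrow> sqrt (x^2+y^2+z^2) \<le> sqrt (a^2)" using that by simp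
      thus ?thesis by (simp only: real_sqrt_le_iff)
    qed
    ultimately show ?thesis by (simp add: euclid_ball_def)
  qed
  thus ?thesis by auto
qed

theorem proposition2p2:
  fixes a :: real and p :: heis and r :: real
  assumes "a > 0" and "is_distance (d_alpha a)" and "r > 0"
  shows "convex (hball a p r)"
proof -
  define F where "F = (\<lambda>q. hdil (1/r) (hmult (hinv q) p))"
  have eq: "hball a p r = {q. F q \<in> cball 0 a}"
  proof -
    have "d_alpha a q p \<le> r \<longleftrightarrow> F q \<in> euclid_ball a" for q
    proof -
      obtain x y z where "hmult (hinv q) p = (x,y,z)" by (metis prod_cases3)
      thus ?thesis unfolding d_alpha_def F_def using key[OF assms(1) assms(3)] by simp
    qed
    thus ?thesis unfolding hball_def using euclid_ball_cball assms(1) by auto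
  qed
  have aff: "F (u *\<^sub>R q1 + v *\<^sub>R q2) = u *\<^sub>R F q1 + v *\<^sub>R F q2" if "u + v = 1" for u v q1 q2
  proof -
    obtain x1 y1 z1 where 1: "q1 = (x1,y1,z1)" by (metis prod_cases3)
    obtain x2 y2 z2 where 2: "q2 = (x2,y2,z2)" by (metis prod_cases3)
    obtain x0 y0 z0 where 0: "p = (x0,y0,z0)" by (metis prod_cases3)
    have v: "v = 1 - u" using that by simp
    show ?thesis unfolding F_def 1 2 0 v
      using assms(3) by (simp add: hdil_def hmult_def hinv_def) (simp add: field_simps)
  qed
  show ?thesis unfolding eq convex_def
  proof (intro allI impI ballI, safe)
    fix x y u v assume "F x \<in> cball 0 a" "F y \<in> cball 0 a" "0 \<le> u" "0 \<le> v" "u + v = (1::real)"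
    thus "F (u *\<^sub>R x + v *\<^sub>R y) \<in> cball 0 a"
      unfolding aff[OF \<open>u + v = 1\<close>]
      using convex_cball[of 0 a] \<open>F x \<in> cball 0 a\<close> \<open>F y \<in> cball 0 a\<close> \<open>0 \<le> u\<close> \<open>0 \<le> v\<close> \<open>u + v = 1\<close>
      unfolding convex_def by blast
  qed
qed

end
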